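(* Let $N=[1,n]=\{1,\dots,n\}$ ($n\ge0$). Then \[ |G_2(N)/{\cong}|=\sum_{[M]\in\mathcal{P}(N)/{\cong}}|\overline{L}_2(|M|)/\mathcal{S}_2| + \sum_{[M]\in\mathcal{P}(N)/{\cong},\ M\notin\mathrm{Sym}}\big(|\overline{t}^{\langle 1\rangle}_{|M|}|+|\overline{t}^{\langle c\rangle}_{|M|}|\big). \]
   Context: Binary CAs: for finite $M=\{j_1<\dots<j_m\}\subset\mathbb{Z}$ and $f:\{0,1\}^m\to\{0,1\}$, $\Phi^M_f(x)_i=f(x_{i+j_1}\dots x_{i+j_m})$ on $\{0,1\}^{\mathbb{Z}}$; $G_2(N)=\{\Phi^N_f\mid f:\{0,1\}^{|N|}\to\{0,1\}\}$. $\overline{L}_2(m)$ is the set of irreducible $f:\{0,1\}^m\to\{0,1\}$ (depending on every argument). On rules: $c$ swaps $0,1$ letterwise, $r$ reverses words, $\hat cf(w)=c f(cw)$, $\hat rf(w)=f(rw)$; $\mathcal{S}_2=\{1,r,c,rc\}$ acts on $\overline{L}_2(m)$, $\mathrm{stab}(f)=\{\alpha\mid\hat\alpha f=f\}$, and $\overline{t}^U_m=\{[f]\in\overline{L}_2(m)/\mathcal{S}_2\mid\mathrm{stab}(f)=U\}$ for $U\le\mathcal{S}_2$. On global maps: $\sigma\Phi=\sigma\circ\Phi$ with $(\sigma x)_i=x_{i+1}$, $\hat c\Phi(x)=c\Phi(cx)$ (cellwise), $\hat r\Phi(x)=r\Phi(rx)$ with $(rx)_i=x_{-i}$; $\mathcal{T}_2$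 is the group generated by these, and $\Phi\cong\Psi$ iff $\Psi=\tau\Phi$ for some $\tau\in\mathcal{T}_2$; $G_2(N)/{\cong}$ is the set of classes of this relation restricted to $G_2(N)$. For sets of integers, $M\cong M'$ iff $M'=j+M$ or $M'=j-M$ for some $j\in\mathbb{Z}$ (where $j\pm M=\{j\pm i\mid i\in M\}$); $\mathcal{P}(N)/{\cong}$ is the set of classes of this relation restricted to subsets of $N$. $\mathrm{Sym}$ is the set of reflection-symmetrical sets, i.e. $M$ with $M=j-M$ for some $j\in\mathbb{Z}$. *)

theory Defs
  imports Main
begin

type_synonym config = "int \<Rightarrow> bool"
type_synonym gmap = "config \<Rightarrow> config"
type_synonym rule = "bool list \<Rightarrow> bool"

definition rules :: "nat \<Rightarrow> rule set" where
  "rules m = {f. \<forall>w. length w \<noteq> m \<longrightarrow> f w = False}"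

definition irr :: "nat \<Rightarrow> rule set" where
  "irr m = {f \<in> rules m. \<forall>k<m. \<exists>w. length w = m \<and> f (w[k := \<not> w ! k]) \<noteq> f w}"

datatype S2 = S1 | Sr | Sc | Src

definition act :: "nat \<Rightarrow> S2 \<Rightarrow> rule \<Rightarrow> rule" where
  "act m \<alpha> f = (case \<alpha> of
      S1 \<Rightarrow> f
    | Sr \<Rightarrow> (\<lambda>w. if length w = m then f (rev w) else False)
    | Sc \<Rightarrow> (\<lambda>w. if length w = m then \<not> f (map Not w) else False)
    | Src \<Rightarrow> (\<lambda>w. if length w = m then \<not> f (map Not (rev w)) else False))"

definition s2rel :: "nat \<Rightarrow> (rule \<times> rule) set" where
  "s2rel m = {(f, g). f \<in> irr m \<and> g \<in> irr m \<and> (\<exists>\<alpha>. g = act m \<alpha> f)}"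

definition stab :: "nat \<Rightarrow> rule \<Rightarrow> S2 set" where
  "stab m f = {\<alpha>. act m \<alpha> f = f}"

definition tbar :: "nat \<Rightarrow> S2 set \<Rightarrow> rule set set" where
  "tbar m U = {C \<in> irr m // s2rel m. \<exists>f\<in>C. stab m f = U}"

definition shiftc :: "config \<Rightarrow> config" where "shiftc x = (\<lambda>i. x (i + 1))"
definition unshiftc :: "config \<Rightarrow> config" where "unshiftc x = (\<lambda>i. x (i - 1))"
definition flipc :: "config \<Rightarrow> config" where "flipc x = (\<lambda>i. \<not> x i)"
definition revc :: "config \<Rightarrow> config" where "revc x = (\<lambda>i. x (- i))"

definition Phi :: "int set \<Rightarrow> rule \<Rightarrow> gmap" where
  "Phi M f = (\<lambda>x i. f (map (\<lambda>j. x (i + j)) (sorted_list_of_set M)))"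

definition G2 :: "int set \<Rightarrow> gmap set" where
  "G2 N = {Phi N f | f. f \<in> rules (card N)}"

text \<open>The group T_2 generated by sigma-hat, c-hat, r-hat (sigma-hat inverse included).\<close>
inductive_set T2 :: "(gmap \<Rightarrow> gmap) set" where
  T2_id: "id \<in> T2"
| T2_shift: "\<tau> \<in> T2 \<Longrightarrow> (\<lambda>\<Phi>. shiftc \<circ> \<tau> \<Phi>) \<in> T2"
| T2_unshift: "\<tau> \<in> T2 \<Longrightarrow> (\<lambda>\<Phi>. unshiftc \<circ> \<tau> \<Phi>) \<in> T2"
| T2_flip: "\<tau> \<in> T2 \<Longrightarrow> (\<lambda>\<Phi>. flipc \<circ> \<tau> \<Phi> \<circ> flipc) \<in> T2"
| T2_rev: "\<tau> \<in> T2 \<Longrightarrow> (\<lambda>\<Phi>. revc \<circ> \<tau> \<Phi> \<circ> revc) \<in> T2"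

definition congG :: "int set \<Rightarrow> (gmap \<times> gmap) set" where
  "congG N = {(\<Phi>, \<Psi>). \<Phi> \<in> G2 N \<and> \<Psi> \<in> G2 N \<and> (\<exists>\<tau>\<in>T2. \<Psi> = \<tau> \<Phi>)}"

definition congS :: "int set \<Rightarrow> (int set \<times> int set) set" where
  "congS N = {(M, M'). M \<subseteq> N \<and> M' \<subseteq> N \<and>
      (\<exists>j. M' = (\<lambda>i. j + i) ` M \<or> M' = (\<lambda>i. j - i) ` M)}"

definition Sym :: "int set set" where
  "Sym = {M. \<exists>j. M = (\<lambda>i. j - i) ` M}"

definition rep :: "'a set \<Rightarrow> 'a" where
  "rep C = (SOME M. M \<in> C)"

end

theory Submission
  imports Defs
begin


definition isR :: "S2 \<Rightarrow> bool" where "isR a = (a = Sr \<or> a = Src)"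
definition isC :: "S2 \<Rightarrow> bool" where "isC a = (a = Sc \<or> a = Src)"
definition mk :: "bool \<Rightarrow> bool \<Rightarrow> S2" where
  "mk r c = (if r then (if c then Src else Sr) else (if c then Sc else S1))"
definition mul :: "S2 \<Rightarrow> S2 \<Rightarrow> S2" where
  "mul a b = mk (isR a \<noteq> isR b) (isC a \<noteq> isC b)"

lemma map_NN[simp]: "map (Not \<circ> Not) w = w" by (induct w) auto

lemma act_S1[simp]: "act m S1 f = f" by (simp add: act_def)

lemma act_rules: "act m a f \<in> rules m" if "f \<in> rules m"
  using that by (cases a) (auto simp: act_def rules_def)

lemma act_mul: "f \<in> rules m \<Longrightarrow> act m a (act m b f) = act m (mul a b) f"
  by (cases a; cases b) (auto simp: act_def rules_def fun_eq_iff mul_def mk_def isR_def isC_def rev_map)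

lemma act_invol: "f \<in> rules m \<Longrightarrow> act m a (act m a f) = f"
  by (cases a) (auto simp: act_def rules_def fun_eq_iff rev_map)

lemma act_comm: "f \<in> rules m \<Longrightarrow> act m a (act m b f) = act m b (act m a f)"
  by (cases a; cases b) (auto simp: act_def rules_def fun_eq_iff rev_map)

lemma act_Src: "act m Src f = act m Sr (act m Sc f)"
  by (auto simp: act_def fun_eq_iff rev_map)

lemma irr_rules: "f \<in> irr m \<Longrightarrow> f \<in> rules m" by (simp add: irr_def)

lemma irr_Sc: assumes "f \<in> irr m" shows "act m Sc f \<in> irr m"
proof -
  have "f \<in> rules m" using assms irr_rules by auto
  then have r: "act m Sc f \<in> rules m" by (rule act_rules)
  show ?thesis unfolding irr_def
  proof (intro CollectI conjI allI impI r)
    fix k assume k: "k < m"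
    then obtain w where w: "length w = m" "f (w[k := \<not> w ! k]) \<noteq> f w"
      using assms by (auto simp: irr_def)
    let ?v = "map Not w"
    have "map Not (?v[k := \<not> ?v ! k]) = w[k := \<not> w ! k]"
      using k w by (simp add: map_update)
    then show "\<exists>w. length w = m \<and> act m Sc f (w[k := \<not> w ! k]) \<noteq> act m Sc f w"
      using w by (intro exI[of _ ?v]) (simp add: act_def)
  qed
qed

lemma irr_Sr: assumes "f \<in> irr m" shows "act m Sr f \<in> irr m"
proof -
  have "f \<in> rules m" using assms irr_rules by auto
  then have r: "act m Sr f \<in> rules m" by (rule act_rules)
  show ?thesis unfolding irr_def
  proof (intro CollectI conjI allI impI r)
    fix k assume k: "k < m"
    then have k': "m - k - 1 < m" by simp
    then obtain w where w: "length w = m" "f (w[m - k - 1 := \<not> w ! (m - k - 1)]) \<noteq> f w"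
      using assms by (auto simp: irr_def)
    let ?v = "rev w"
    have "rev (?v[k := \<not> ?v ! k]) = w[m - k - 1 := \<not> w ! (m - k - 1)]"
      using k w by (simp add: rev_update rev_nth)
    then show "\<exists>w. length w = m \<and> act m Sr f (w[k := \<not> w ! k]) \<noteq> act m Sr f w"
      using w by (intro exI[of _ ?v]) (simp add: act_def)
  qed
qed

lemma irr_act: "f \<in> irr m \<Longrightarrow> act m a f \<in> irr m"
  by (cases a) (auto simp: act_Src irr_Sc irr_Sr)

lemma finite_rules: "finite (rules m)"
proof -
  have "rules m \<subseteq> (\<lambda>S w. w \<in> S) ` Pow {w :: bool list. length w = m}"
  proof
    fix f assume "f \<in> rules m"
    then have "f = (\<lambda>w. w \<in> {w. length w = m \<and> f w})" by (auto simp: rules_def fun_eq_iff)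
    then show "f \<in> (\<lambda>S w. w \<in> S) ` Pow {w :: bool list. length w = m}" by blast
  qed
  moreover have "finite {w :: bool list. length w = m}" using finite_lists_length_eq[of "UNIV::bool set" m] by simp
  ultimately show ?thesis by (meson finite_Pow_iff finite_imageI finite_subset)
qed

lemma finite_irr: "finite (irr m)"
  by (rule finite_subset[OF _ finite_rules]) (auto simp: irr_def)




lemma card_quot_bij:
  assumes eq: "equiv A r" and bij: "bij_betw h A B" and s: "s \<subseteq> B \<times> B"
    and iff: "\<And>a a'. a \<in> A \<Longrightarrow> a' \<in> A \<Longrightarrow> (a, a') \<in> r \<longleftrightarrow> (h a, h a') \<in> s"
  shows "card (A // r) = card (B // s)"
proof -
  have rA: "r \<subseteq> A \<times> A" using eq by (auto simp: equiv_def refl_on_def)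
  have hB: "B = h ` A" using bij by (auto simp: bij_betw_def)
  have cls: "s `` {h a} = h ` (r `` {a})" if a: "a \<in> A" for a
  proof
    show "s `` {h a} \<subseteq> h ` (r `` {a})"
    proof
      fix z assume "z \<in> s `` {h a}"
      then have "(h a, z) \<in> s" by auto
      then have "z \<in> B" using s by auto
      then obtain a' where a': "a' \<in> A" "z = h a'" using hB by auto
      then have "(a, a') \<in> r" using iff a \<open>(h a, z) \<in> s\<close> by auto
      then show "z \<in> h ` (r `` {a})" using a' by auto
    qed
    show "h ` (r `` {a}) \<subseteq> s `` {h a}" using iff a rA by auto
  qed
  have "B // s = (image h) ` (A // r)"
  proof -
    have "B // s = (\<Union>a\<in>A. {s `` {h a}})" unfolding quotient_def hB by auto
    also have "\<dots> = (\<Union>a\<in>A. {h ` (r `` {a})})" using cls by auto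
    also have "\<dots> = (image h) ` (A // r)" unfolding quotient_def by auto
    finally show ?thesis .
  qed
  moreover have "inj_on (image h) (A // r)"
    using bij by (intro inj_on_image) (simp add: Union_quotient[OF eq] bij_betw_def)
  ultimately show ?thesis by (simp add: card_image)
qed

lemma card_quot_gen:
  assumes eq: "equiv A r" and hAB: "h ` A \<subseteq> B"
    and surj: "\<And>b. b \<in> B \<Longrightarrow> \<exists>a\<in>A. (h a, b) \<in> s"
    and iff: "\<And>a a'. a \<in> A \<Longrightarrow> a' \<in> A \<Longrightarrow> (a, a') \<in> r \<longleftrightarrow> (h a, h a') \<in> s"
    and sy: "sym s" and tr: "trans s" and rf: "\<And>b. b \<in> B \<Longrightarrow> (b, b) \<in> s"
  shows "card (A // r) = card (B // s)"
proof -
  have rA: "r \<subseteq> A \<times> A" using eq by (auto simp: equiv_def refl_on_def)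
  have sEq: "s `` {x} = s `` {y}" if "(x, y) \<in> s" for x y
    using that sy tr unfolding sym_def trans_def by blast
  define F where "F X = s `` (h ` X)" for X
  have Fc: "F (r `` {a}) = s `` {h a}" if a: "a \<in> A" for a
  proof
    show "F (r `` {a}) \<subseteq> s `` {h a}"
      unfolding F_def using iff a rA tr unfolding trans_def by blast
    show "s `` {h a} \<subseteq> F (r `` {a})"
      unfolding F_def using a eq by (auto simp: equiv_def refl_on_def)
  qed
  have "F ` (A // r) = B // s"
  proof
    show "F ` (A // r) \<subseteq> B // s"
    proof
      fix Y assume "Y \<in> F ` (A // r)"
      then obtain a where a: "a \<in> A" "Y = F (r `` {a})" by (auto simp: quotient_def)
      then have "Y = s `` {h a}" "h a \<in> B" using Fc hAB by auto
      then show "Y \<in> B // s" by (auto simp: quotient_def)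
    qed
    show "B // s \<subseteq> F ` (A // r)"
    proof
      fix Y assume "Y \<in> B // s"
      then obtain b where b: "b \<in> B" "Y = s `` {b}" by (auto simp: quotient_def)
      then obtain a where a: "a \<in> A" "(h a, b) \<in> s" using surj by auto
      then have "Y = F (r `` {a})" using Fc sEq b by auto
      then show "Y \<in> F ` (A // r)" using a by (auto simp: quotient_def)
    qed
  qed
  moreover have "inj_on F (A // r)"
  proof (rule inj_onI)
    fix X X' assume X: "X \<in> A // r" and X': "X' \<in> A // r" and e: "F X = F X'"
    obtain a where a: "a \<in> A" "X = r `` {a}" using X by (auto simp: quotient_def)
    obtain a' where a': "a' \<in> A" "X' = r `` {a'}" using X' by (auto simp: quotient_def)
    have "s `` {h a} = s `` {h a'}" using e Fc a a' by simp
    moreover have "h a' \<in> s `` {h a'}" using rf hAB a' by auto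
    ultimately have "(h a, h a') \<in> s" by auto
    then have "(a, a') \<in> r" using iff a a' by auto
    then show "X = X'" using a a' equiv_class_eq[OF eq] by auto
  qed
  ultimately show ?thesis using card_image by fastforce
qed

lemma card_quot_sum:
  assumes eqY: "equiv Y r" and fY: "finite Y" and eqZ: "equiv Z s" and fZ: "finite Z"
    and hYZ: "h ` Y \<subseteq> Z" and hr: "\<And>y y'. (y, y') \<in> r \<Longrightarrow> (h y, h y') \<in> s"
  shows "card (Y // r) = (\<Sum>K\<in>Z // s. card ({y\<in>Y. h y \<in> K} // r))"
proof -
  let ?A = "\<lambda>K. {y\<in>Y. h y \<in> K} // r"
  have rY: "r \<subseteq> Y \<times> Y" using eqY by (auto simp: equiv_def refl_on_def)
  have "Y // r = \<Union> (?A ` (Z // s))"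
  proof
    show "Y // r \<subseteq> \<Union> (?A ` (Z // s))"
    proof
      fix X assume "X \<in> Y // r"
      then obtain y where y: "y \<in> Y" "X = r `` {y}" by (auto simp: quotient_def)
      have "h y \<in> Z" using y hYZ by auto
      then have K: "s `` {h y} \<in> Z // s" by (auto simp: quotient_def)
      have "h y \<in> s `` {h y}" using eqZ \<open>h y \<in> Z\<close> by (auto simp: equiv_def refl_on_def)
      then have "X \<in> ?A (s `` {h y})" using y by (auto simp: quotient_def)
      then show "X \<in> \<Union> (?A ` (Z // s))" using K by blast
    qed
    show "\<Union> (?A ` (Z // s)) \<subseteq> Y // r" by (auto simp: quotient_def)
  qed
  moreover have "card (\<Union> (?A ` (Z // s))) = (\<Sum>K\<in>Z // s. card (?A K))"
  proof (rule card_UN_disjoint)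
    show "finite (Z // s)" using fZ eqZ by (simp add: finite_quotient equiv_def)
    have fq: "finite (Y // r)" using fY rY by (rule finite_quotient)
    show "\<forall>K\<in>Z // s. finite (?A K)"
      by (intro ballI finite_subset[OF _ fq]) (auto simp: quotient_def)
    show "\<forall>K\<in>Z // s. \<forall>K'\<in>Z // s. K \<noteq> K' \<longrightarrow> ?A K \<inter> ?A K' = {}"
    proof (intro ballI impI)
      fix K K' assume K: "K \<in> Z // s" and K': "K' \<in> Z // s" and ne: "K \<noteq> K'"
      show "?A K \<inter> ?A K' = {}"
      proof (rule ccontr)
        assume "?A K \<inter> ?A K' \<noteq> {}"
        then obtain y y' where y: "y \<in> Y" "h y \<in> K" and y': "y' \<in> Y" "h y' \<in> K'"
          and e: "r `` {y} = r `` {y'}" by (auto simp: quotient_def)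
        have "(y, y') \<in> r" using e eq_equiv_class_iff[OF eqY] y y' by blast
        then have "(h y, h y') \<in> s" by (rule hr)
        then have "K = K'" using K K' y y' quotient_eqI[OF eqZ] by blast
        then show False using ne by simp
      qed
    qed
  qed
  ultimately show ?thesis by simp
qed




definition crel :: "nat \<Rightarrow> (rule \<times> rule) set" where
  "crel m = {(f, g). f \<in> irr m \<and> g \<in> irr m \<and> (g = f \<or> g = act m Sc f)}"

lemma equiv_s2rel: "equiv (irr m) (s2rel m)"
proof (rule equivI)
  show "s2rel m \<subseteq> irr m \<times> irr m" by (auto simp: s2rel_def)
  show "refl_on (irr m) (s2rel m)"
    unfolding refl_on_def s2rel_def by (auto intro!: exI[where x=S1])
  show "sym (s2rel m)"
    by (auto simp: sym_def s2rel_def intro!: act_invol[symmetric] dest!: irr_rules)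
  show "trans (s2rel m)"
    unfolding trans_def s2rel_def by (auto dest!: irr_rules simp: act_mul)
qed

lemma equiv_crel: "equiv (irr m) (crel m)"
proof (rule equivI)
  show "crel m \<subseteq> irr m \<times> irr m" by (auto simp: crel_def)
  show "refl_on (irr m) (crel m)" unfolding refl_on_def crel_def by auto
  show "sym (crel m)"
    by (auto simp: sym_def crel_def dest!: irr_rules intro: act_invol[symmetric])
  show "trans (crel m)"
    unfolding trans_def crel_def by (auto dest!: irr_rules simp: act_invol)
qed

lemma crel_s2rel: "(f, g) \<in> crel m \<Longrightarrow> (f, g) \<in> s2rel m"
  by (auto simp: crel_def s2rel_def intro: exI[of _ S1] exI[of _ Sc])

lemma stab_act: assumes f: "f \<in> rules m" shows "stab m (act m a f) = stab m f"
proof -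
  have "act m b (act m a f) = act m a f \<longleftrightarrow> act m b f = f" for b
  proof
    assume "act m b (act m a f) = act m a f"
    then have "act m a (act m b f) = act m a f" using act_comm[OF f] by simp
    then have "act m a (act m a (act m b f)) = act m a (act m a f)" by simp
    then show "act m b f = f" using act_invol f act_rules by metis
  qed (simp add: act_comm[OF f])
  then show ?thesis unfolding stab_def by simp
qed

lemma stab_eq_iff: "stab m f = U \<longleftrightarrow> (S1 \<in> U \<and> (Sr \<in> U \<longleftrightarrow> act m Sr f = f)
   \<and> (Sc \<in> U \<longleftrightarrow> act m Sc f = f) \<and> (Src \<in> U \<longleftrightarrow> act m Src f = f))"
  unfolding stab_def set_eq_iff
  apply (rule iffI)
  subgoal
    apply (frule spec[of _ S1], frule spec[of _ Sr], frule spec[of _ Sc], drule spec[of _ Src])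
    by simp
  apply (intro allI)
  subgoal for x by (cases x) auto
  done

lemma s2class: assumes f: "f \<in> irr m" shows "s2rel m `` {f} = {f, act m Sr f, act m Sc f, act m Src f}"
proof
  show "s2rel m `` {f} \<subseteq> {f, act m Sr f, act m Sc f, act m Src f}"
  proof
    fix g assume "g \<in> s2rel m `` {f}"
    then obtain a where "g = act m a f" by (auto simp: s2rel_def)
    then show "g \<in> {f, act m Sr f, act m Sc f, act m Src f}" by (cases a) auto
  qed
  have "act m a f \<in> s2rel m `` {f}" for a using f irr_act by (auto simp: s2rel_def)
  from this[of S1] this[of Sr] this[of Sc] this[of Src]
  show "{f, act m Sr f, act m Sc f, act m Src f} \<subseteq> s2rel m `` {f}" by simp
qed

lemma cclass: "f \<in> irr m \<Longrightarrow> crel m `` {f} = {f, act m Sc f}"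
  by (auto simp: crel_def irr_act)

lemma card_fiber:
  assumes f: "f \<in> irr m"
  shows "card ((s2rel m `` {f}) // crel m) =
     1 + (if stab m f = {S1} then 1 else 0) + (if stab m f = {S1, Sc} then 1 else 0)"
proof -
  have fr: "f \<in> rules m" using f irr_rules by auto
  let ?r = "act m Sr f" and ?c = "act m Sc f" and ?rc = "act m Src f"
  have irs: "?r \<in> irr m" "?c \<in> irr m" "?rc \<in> irr m" using f irr_act by auto
  have rc1: "act m Sc ?r = ?rc" using fr by (simp add: act_mul mul_def mk_def isR_def isC_def)
  have rc2: "act m Sc ?rc = ?r" using fr by (simp add: act_mul mul_def mk_def isR_def isC_def)
  have cc: "act m Sc ?c = f" using fr by (simp add: act_invol)
  have "(s2rel m `` {f}) // crel m = {{f, ?c}, {?r, ?rc}}"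
    unfolding s2class[OF f] quotient_def
    using cclass[OF f] cclass[OF irs(1)] cclass[OF irs(2)] cclass[OF irs(3)] rc1 rc2 cc
    by auto
  moreover have "{f, ?c} = {?r, ?rc} \<longleftrightarrow> (?r = f \<or> ?rc = f)"
  proof
    assume "{f, ?c} = {?r, ?rc}"
    then have "?r = f \<or> ?r = ?c" by blast
    then show "?r = f \<or> ?rc = f"
    proof
      assume "?r = ?c"
      then have "act m Sc ?r = act m Sc ?c" by simp
      then show ?thesis using rc1 cc by simp
    qed simp
  next
    assume "?r = f \<or> ?rc = f"
    then show "{f, ?c} = {?r, ?rc}"
    proof
      assume "?r = f" then show ?thesis using rc1 by simp
    next
      assume h: "?rc = f"
      then have "act m Sc ?rc = ?c" by simp
      then have "?r = ?c" using rc2 by simp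
      then show ?thesis using h by auto
    qed
  qed
  ultimately show ?thesis
    by (auto simp: stab_eq_iff card_insert_if)
qed

lemma tbar_mem: "f \<in> irr m \<Longrightarrow> s2rel m `` {f} \<in> tbar m U \<longleftrightarrow> stab m f = U"
proof
  assume f: "f \<in> irr m" and "s2rel m `` {f} \<in> tbar m U"
  then obtain g where g: "g \<in> s2rel m `` {f}" "stab m g = U" by (auto simp: tbar_def)
  then obtain a where "g = act m a f" by (auto simp: s2rel_def)
  then show "stab m f = U" using g stab_act f irr_rules by metis
next
  assume f: "f \<in> irr m" and "stab m f = U"
  moreover have "f \<in> s2rel m `` {f}" using f equiv_s2rel by (auto simp: equiv_def refl_on_def)
  ultimately show "s2rel m `` {f} \<in> tbar m U" by (auto simp: tbar_def quotient_def)
qed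

lemma crel_count:
  "card (irr m // crel m) = card (irr m // s2rel m) + card (tbar m {S1}) + card (tbar m {S1, Sc})"
proof -
  have "card (irr m // crel m) = (\<Sum>D\<in>irr m // s2rel m. card ({y\<in>irr m. id y \<in> D} // crel m))"
    by (rule card_quot_sum[OF equiv_crel finite_irr equiv_s2rel finite_irr])
       (auto intro: crel_s2rel)
  also have "\<dots> = (\<Sum>D\<in>irr m // s2rel m. 1 + (if D \<in> tbar m {S1} then 1 else 0)
                      + (if D \<in> tbar m {S1, Sc} then 1 else 0))"
  proof (rule sum.cong[OF refl])
    fix D assume "D \<in> irr m // s2rel m"
    then obtain f where f: "f \<in> irr m" "D = s2rel m `` {f}" by (auto simp: quotient_def)
    have "{y\<in>irr m. id y \<in> D} = D" using f by (auto simp: s2rel_def)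
    then show "card ({y\<in>irr m. id y \<in> D} // crel m) = 1 + (if D \<in> tbar m {S1} then 1 else 0)
                      + (if D \<in> tbar m {S1, Sc} then 1 else 0)"
      using card_fiber[OF f(1)] tbar_mem[OF f(1)] f(2) by simp
  qed
  also have "\<dots> = card (irr m // s2rel m) + card (irr m // s2rel m \<inter> tbar m {S1})
        + card (irr m // s2rel m \<inter> tbar m {S1, Sc})"
  proof -
    have fin: "finite (irr m // s2rel m)"
      using finite_quotient[OF finite_irr] equiv_s2rel by (auto simp: equiv_def refl_on_def)
    have e: "(\<Sum>D\<in>irr m // s2rel m. (if D \<in> T then 1 else 0)) = card (irr m // s2rel m \<inter> T)"
      for T :: "rule set set"
      using fin by (simp add: sum.If_cases)
    show ?thesis by (simp only: sum.distrib e) simp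
  qed
  also have "irr m // s2rel m \<inter> tbar m {S1} = tbar m {S1}" by (auto simp: tbar_def)
  also have "irr m // s2rel m \<inter> tbar m {S1, Sc} = tbar m {S1, Sc}" by (auto simp: tbar_def)
  finally show ?thesis .
qed




abbreviation sl :: "int set \<Rightarrow> int list" where "sl M \<equiv> sorted_list_of_set M"

definition lst :: "int set \<Rightarrow> config \<Rightarrow> bool list" where
  "lst M y = map y (sl M)"

definition extw :: "int set \<Rightarrow> bool list \<Rightarrow> config" where
  "extw M w j = (case map_of (zip (sl M) w) j of Some b \<Rightarrow> b | None \<Rightarrow> False)"

definition dep :: "(config \<Rightarrow> bool) \<Rightarrow> int \<Rightarrow> bool" where
  "dep F j = (\<exists>y. F (y(j := \<not> y j)) \<noteq> F y)"

lemma len_lst[simp]: "length (lst M y) = card M"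
  by (simp add: lst_def)

lemma E1: assumes "finite M" "length w = card M" shows "lst M (extw M w) = w"
proof (rule nth_equalityI)
  show "length (lst M (extw M w)) = length w" using assms by simp
  fix i assume "i < length (lst M (extw M w))"
  then have i: "i < length w" using assms by simp
  have "map_of (zip (sl M) w) (sl M ! i) = Some (w ! i)"
    using assms i by (intro map_of_zip_nth) auto
  then show "lst M (extw M w) ! i = w ! i"
    using i assms by (simp add: lst_def extw_def)
qed

lemma E2: "finite M \<Longrightarrow> lst M y = lst M y' \<longleftrightarrow> (\<forall>j\<in>M. y j = y' j)"
  by (simp add: lst_def)

lemma E3: assumes "finite M" "k < card M"
  shows "lst M (y(sl M ! k := b)) = (lst M y)[k := b]"
proof (rule nth_equalityI)
  show "length (lst M (y(sl M ! k := b))) = length ((lst M y)[k := b])" by simp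
  fix i assume "i < length (lst M (y(sl M ! k := b)))"
  then have i: "i < card M" by simp
  have "sl M ! i = sl M ! k \<longleftrightarrow> i = k"
    using assms i by (intro nth_eq_iff_index_eq) auto
  then show "lst M (y(sl M ! k := b)) ! i = (lst M y)[k := b] ! i"
    using i assms by (auto simp: lst_def nth_list_update)
qed

lemma ext_lst: "finite M \<Longrightarrow> j \<in> M \<Longrightarrow> extw M (lst M y) j = y j"
  using E1[of M "lst M y"] E2[of M "extw M (lst M y)" y] by simp

lemma Phi_lst: "Phi M g x i = g (lst M (\<lambda>j. x (i + j)))"
  by (simp add: Phi_def lst_def)

lemma Phi_loc: "Phi M g y 0 = g (lst M y)"
  by (simp add: Phi_lst)

lemma nodep: assumes "finite M" "j \<notin> M" shows "\<not> dep (\<lambda>y. g (lst M y)) j"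
proof -
  have "lst M (y(j := b)) = lst M y" for y b using assms E2[OF assms(1)] by auto
  then show ?thesis by (simp add: dep_def)
qed

lemma D1: assumes M: "finite M" and g: "g \<in> irr (card M)"
  shows "{j. dep (\<lambda>y. g (lst M y)) j} = M"
proof
  show "{j. dep (\<lambda>y. g (lst M y)) j} \<subseteq> M" using nodep M by blast
  show "M \<subseteq> {j. dep (\<lambda>y. g (lst M y)) j}"
  proof
    fix j assume j: "j \<in> M"
    then obtain k where k: "k < card M" "j = sl M ! k"
      using M by (metis in_set_conv_nth length_sorted_list_of_set set_sorted_list_of_set)
    then obtain w where w: "length w = card M" "g (w[k := \<not> w ! k]) \<noteq> g w"
      using g by (auto simp: irr_def)
    let ?y = "extw M w"
    have l: "lst M ?y = w" using E1 M w by simp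
    have "lst M ?y ! k = ?y (sl M ! k)" using k M by (simp add: lst_def)
    then have "?y j = w ! k" using l k by simp
    then have "lst M (?y(j := \<not> ?y j)) = w[k := \<not> w ! k]"
      using E3[OF M k(1), of ?y] k l by simp
    then show "j \<in> {j. dep (\<lambda>y. g (lst M y)) j}"
      using w l by (auto simp: dep_def intro!: exI[of _ ?y])
  qed
qed

lemma rules_eqI: "f \<in> rules m \<Longrightarrow> g \<in> rules m \<Longrightarrow> (\<And>w. length w = m \<Longrightarrow> f w = g w) \<Longrightarrow> f = g"
  by (auto simp: rules_def fun_eq_iff)

lemma P3: assumes M: "finite M" and M': "finite M'" and g: "g \<in> irr (card M)"
  and g': "g' \<in> irr (card M')" and e: "Phi M g = Phi M' g'"
  shows "M = M' \<and> g = g'"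
proof -
  have loc: "(\<lambda>y. g (lst M y)) = (\<lambda>y. g' (lst M' y))"
    using e by (metis Phi_loc)
  then have "M = M'" using D1[OF M g] D1[OF M' g'] by simp
  moreover have "g = g'"
  proof (rule rules_eqI)
    show "g \<in> rules (card M)" "g' \<in> rules (card M)" using g g' \<open>M = M'\<close> by (auto simp: irr_def)
    fix w :: "bool list" assume "length w = card M"
    then have "lst M (extw M w) = w" by (rule E1[OF M])
    moreover have "g (lst M (extw M w)) = g' (lst M' (extw M w))" using loc by metis
    ultimately show "g w = g' w" using \<open>M = M'\<close> by simp
  qed
  ultimately show ?thesis by simp
qed

lemma P1: assumes N: "finite N" and MN: "M \<subseteq> N" and g: "g \<in> rules (card M)"
  shows "Phi M g \<in> G2 N"
proof -
  have M: "finite M" using N MN finite_subset by auto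
  define f where "f w = (if length w = card N then g (lst M (extw N w)) else False)" for w
  have f: "f \<in> rules (card N)" by (simp add: rules_def f_def)
  have "Phi M g = Phi N f"
  proof (intro ext, rule sym)
    fix x :: config and i :: int
    let ?y = "\<lambda>j. x (i + j)"
    have "lst M (extw N (lst N ?y)) = lst M ?y"
      using ext_lst[OF N] MN E2[OF M] by auto
    then show "Phi N f x i = Phi M g x i" by (simp add: Phi_lst f_def)
  qed
  then show ?thesis using f unfolding G2_def by blast
qed




lemma nodep_eq:
  assumes fD: "finite D" and nd: "\<And>d. d \<in> D \<Longrightarrow> \<not> dep F d"
    and ag: "\<forall>j. j \<notin> D \<longrightarrow> y j = y' j"
  shows "F y = F y'"
  using fD nd ag
proof (induction D arbitrary: y y' rule: finite_induct)
  case empty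
  then have "y = y'" by (simp add: fun_eq_iff)
  then show ?case by simp
next
  case (insert d D)
  let ?y1 = "y(d := y' d)"
  have nd1: "\<And>d'. d' \<in> D \<Longrightarrow> \<not> dep F d'" using insert.prems(1) by blast
  have ag1: "\<forall>j. j \<notin> D \<longrightarrow> ?y1 j = y' j" using insert.prems(2) by simp
  have "F ?y1 = F y'" by (rule insert.IH[OF nd1 ag1])
  moreover have "F y = F ?y1"
  proof (cases "y d = y' d")
    case True
    then have "?y1 = y" by (simp add: fun_upd_idem)
    then show ?thesis by simp
  next
    case False
    then have e: "?y1 = y(d := \<not> y d)" by (simp add: fun_eq_iff)
    have "\<not> dep F d" using insert.prems(1) by simp
    then have "F (y(d := \<not> y d)) = F y" unfolding dep_def by blast
    then show ?thesis using e by simp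
  qed
  ultimately show ?case by simp
qed

lemma P2: assumes N: "finite N" and Phi: "\<Phi> \<in> G2 N"
  shows "\<exists>M g. M \<subseteq> N \<and> g \<in> irr (card M) \<and> \<Phi> = Phi M g"
proof -
  obtain f where f: "f \<in> rules (card N)" "\<Phi> = Phi N f" using Phi by (auto simp: G2_def)
  define F where "F y = f (lst N y)" for y
  define M where "M = {j. dep F j}"
  have Fe: "F = (\<lambda>y. f (lst N y))" by (simp add: F_def fun_eq_iff)
  have MN: "M \<subseteq> N"
  proof
    fix j assume "j \<in> M"
    then have "dep F j" by (simp add: M_def)
    then show "j \<in> N" using nodep[OF N, of j f] Fe by auto
  qed
  have M: "finite M" using MN N finite_subset by auto
  have K: "F y = F y'" if a: "\<forall>j\<in>M. y j = y' j" for y y'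
  proof -
    let ?r = "\<lambda>y j. if j \<in> N then y j else False"
    have "lst N y = lst N (?r y)" "lst N y' = lst N (?r y')" using E2[OF N] by auto
    then have "F y = F (?r y)" "F y' = F (?r y')" by (simp_all add: Fe)
    moreover have "F (?r y) = F (?r y')"
    proof (rule nodep_eq[where D="N - M" and F=F])
      show "finite (N - M)" using N by simp
      show "\<not> dep F d" if "d \<in> N - M" for d using that by (simp add: M_def)
      show "\<forall>j. j \<notin> N - M \<longrightarrow> ?r y j = ?r y' j" using a by auto
    qed
    ultimately show ?thesis by simp
  qed
  define g where "g w = (if length w = card M then F (extw M w) else False)" for w
  have gr: "g \<in> rules (card M)" by (simp add: rules_def g_def)
  have gl: "g (lst M y) = F y" for y
  proof -
    have "g (lst M y) = F (extw M (lst M y))" by (simp add: g_def)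
    also have "\<dots> = F y" by (rule K) (simp add: ext_lst[OF M])
    finally show ?thesis .
  qed
  have "\<Phi> = Phi M g"
  proof (intro ext)
    fix x :: config and i :: int
    have "\<Phi> x i = F (\<lambda>j. x (i + j))" using f(2) by (simp add: Phi_lst Fe)
    also have "\<dots> = Phi M g x i" using gl by (simp add: Phi_lst)
    finally show "\<Phi> x i = Phi M g x i" .
  qed
  moreover have "g \<in> irr (card M)"
    unfolding irr_def
  proof (intro CollectI conjI gr allI impI)
    fix k assume k: "k < card M"
    let ?j = "sl M ! k"
    have "?j \<in> M" using k M by (metis nth_mem length_sorted_list_of_set set_sorted_list_of_set)
    then obtain y where y: "F (y(?j := \<not> y ?j)) \<noteq> F y" by (auto simp: M_def dep_def)
    let ?w = "lst M y"
    have "?w ! k = y ?j" using k M by (simp add: lst_def)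
    then have "?w[k := \<not> ?w ! k] = lst M (y(?j := \<not> y ?j))" using E3[OF M k] by simp
    then show "\<exists>w. length w = card M \<and> g (w[k := \<not> w ! k]) \<noteq> g w"
      using y gl by (intro exI[of _ ?w]) simp
  qed
  ultimately show ?thesis using MN by blast
qed




definition img :: "int \<Rightarrow> S2 \<Rightarrow> int set \<Rightarrow> int set" where
  "img j a M = (if isR a then (\<lambda>i. j - i) ` M else (\<lambda>i. j + i) ` M)"

lemma finite_img[simp]: "finite (img j a M) = finite M"
proof -
  have "inj (\<lambda>i::int. j - i)" "inj (\<lambda>i::int. j + i)" by (auto simp: inj_def)
  then show ?thesis by (auto simp: img_def finite_image_iff inj_on_subset[of _ UNIV])
qed

lemma card_img[simp]: "card (img j a M) = card M"
proof -
  have "inj_on (\<lambda>i::int. j - i) M" "inj_on (\<lambda>i::int. j + i) M" by (auto simp: inj_on_def)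
  then show ?thesis by (auto simp: img_def card_image)
qed

lemma isR_mul: "isR (mul a b) = (isR a \<noteq> isR b)"
  by (simp add: mul_def mk_def isR_def)

lemma img_img: "img j a (img j' b M) = img (if isR a then j - j' else j + j') (mul a b) M"
  by (auto simp: img_def isR_mul image_image algebra_simps)

lemma img_0_S1[simp]: "img 0 S1 M = M"
  by (simp add: img_def isR_def)

lemma img_0_Sc[simp]: "img 0 Sc M = M"
  by (simp add: img_def isR_def)

lemma mul_S1[simp]: "mul S1 a = a"
  by (cases a) (simp_all add: mul_def mk_def isR_def isC_def)

lemma mul_self[simp]: "mul a a = S1"
  by (cases a) (simp_all add: mul_def mk_def isR_def isC_def)

definition shiftk :: "int \<Rightarrow> config \<Rightarrow> config" where "shiftk k x = (\<lambda>i. x (i + k))"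

lemma sl_shift: assumes "finite M" shows "sl ((\<lambda>i. k + i) ` M) = map (\<lambda>i. k + i) (sl M)"
proof (rule strict_sorted_equal)
  show "sorted_wrt (<) (sl ((\<lambda>i. k + i) ` M))" by simp
  show "sorted_wrt (<) (map (\<lambda>i. k + i) (sl M))" by (simp add: sorted_wrt_map)
  show "set (sl ((\<lambda>i. k + i) ` M)) = set (map (\<lambda>i. k + i) (sl M))" using assms by simp
qed

lemma sl_neg: assumes "finite M" shows "sl (uminus ` M) = rev (map uminus (sl M))"
proof (rule strict_sorted_equal)
  show "sorted_wrt (<) (sl (uminus ` M))" by simp
  show "sorted_wrt (<) (rev (map uminus (sl M)))" by (simp add: sorted_wrt_map sorted_wrt_rev)
  show "set (sl (uminus ` M)) = set (rev (map uminus (sl M)))" using assms by simp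
qed

lemma isR_simps[simp]: "\<not> isR S1" "isR Sr" "\<not> isR Sc" "isR Src"
  by (simp_all add: isR_def)

lemma img_0_Sr: "img 0 Sr M = uminus ` M"
  by (simp add: img_def)

lemma L_shift: assumes M: "finite M"
  shows "shiftk k \<circ> Phi M g = Phi (img k S1 M) (act (card M) S1 g)"
proof -
  have s: "sl (img k S1 M) = map (\<lambda>i. k + i) (sl M)" by (simp add: img_def sl_shift M)
  show ?thesis
  proof (intro ext)
    fix x :: config and i :: int
    show "(shiftk k \<circ> Phi M g) x i = Phi (img k S1 M) (act (card M) S1 g) x i"
      by (simp add: shiftk_def Phi_def s comp_def add.assoc)
  qed
qed

lemma L_flip: "finite M \<Longrightarrow> flipc \<circ> Phi M g \<circ> flipc = Phi (img 0 Sc M) (act (card M) Sc g)"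
  by (auto simp: fun_eq_iff flipc_def Phi_def act_def comp_def)

lemma L_rev: assumes M: "finite M"
  shows "revc \<circ> Phi M g \<circ> revc = Phi (img 0 Sr M) (act (card M) Sr g)"
proof -
  have c: "card (uminus ` M) = card M" using card_img[of 0 Sr M] by (simp add: img_0_Sr)
  have "rev (map (\<lambda>j. x (i + j)) (rev (map uminus L))) = map (\<lambda>j. x (- (- i + j))) L" for x :: config and i L
    by (simp add: rev_map)
  then show ?thesis
    using M c by (simp add: fun_eq_iff revc_def Phi_def act_def img_0_Sr sl_neg)
qed

lemma shiftc_k: "shiftc = shiftk 1" by (simp add: fun_eq_iff shiftc_def shiftk_def)
lemma unshiftc_k: "unshiftc = shiftk (-1)" by (simp add: fun_eq_iff unshiftc_def shiftk_def)




lemma T2_fwd: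
  assumes "\<tau> \<in> T2" and M: "finite M" and g: "g \<in> rules (card M)"
  shows "\<exists>j a. \<tau> (Phi M g) = Phi (img j a M) (act (card M) a g)"
  using assms(1)
proof induction
  case T2_id
  show ?case by (rule exI[of _ 0], rule exI[of _ S1]) simp
next
  case (T2_shift \<tau>)
  then obtain j a where e: "\<tau> (Phi M g) = Phi (img j a M) (act (card M) a g)" by blast
  have "shiftc \<circ> \<tau> (Phi M g) = shiftk 1 \<circ> Phi (img j a M) (act (card M) a g)" by (simp add: e shiftc_k)
  also have "\<dots> = Phi (img 1 S1 (img j a M)) (act (card M) a g)" using L_shift[of "img j a M" 1 "act (card M) a g"] M by simp
  also have "\<dots> = Phi (img (1 + j) a M) (act (card M) a g)" by (simp add: img_img)
  finally have "shiftc \<circ> \<tau> (Phi M g) = Phi (img (1 + j) a M) (act (card M) a g)" .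
  then show ?case by blast
next
  case (T2_unshift \<tau>)
  then obtain j a where e: "\<tau> (Phi M g) = Phi (img j a M) (act (card M) a g)" by blast
  have "unshiftc \<circ> \<tau> (Phi M g) = shiftk (-1) \<circ> Phi (img j a M) (act (card M) a g)" by (simp add: e unshiftc_k)
  also have "\<dots> = Phi (img (-1) S1 (img j a M)) (act (card M) a g)" using L_shift[of "img j a M" "-1" "act (card M) a g"] M by simp
  also have "\<dots> = Phi (img (- 1 + j) a M) (act (card M) a g)" by (simp add: img_img)
  finally have "unshiftc \<circ> \<tau> (Phi M g) = Phi (img (- 1 + j) a M) (act (card M) a g)" .
  then show ?case by blast
next
  case (T2_flip \<tau>)
  then obtain j a where e: "\<tau> (Phi M g) = Phi (img j a M) (act (card M) a g)" by blast
  have "flipc \<circ> \<tau> (Phi M g) \<circ> flipc = Phi (img 0 Sc (img j a M)) (act (card M) Sc (act (card M) a g))"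
    using L_flip[of "img j a M" "act (card M) a g"] M e by simp
  also have "\<dots> = Phi (img j (mul Sc a) M) (act (card M) (mul Sc a) g)"
    by (simp only: img_img act_mul[OF g] isR_simps if_False add_0)
  finally have "flipc \<circ> \<tau> (Phi M g) \<circ> flipc = Phi (img j (mul Sc a) M) (act (card M) (mul Sc a) g)" .
  then show ?case by blast
next
  case (T2_rev \<tau>)
  then obtain j a where e: "\<tau> (Phi M g) = Phi (img j a M) (act (card M) a g)" by blast
  have "revc \<circ> \<tau> (Phi M g) \<circ> revc = Phi (img 0 Sr (img j a M)) (act (card M) Sr (act (card M) a g))"
    using L_rev[of "img j a M" "act (card M) a g"] M e by simp
  also have "\<dots> = Phi (img (0 - j) (mul Sr a) M) (act (card M) (mul Sr a) g)"
    by (simp only: img_img act_mul[OF g] isR_simps if_True)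
  finally have "revc \<circ> \<tau> (Phi M g) \<circ> revc = Phi (img (0 - j) (mul Sr a) M) (act (card M) (mul Sr a) g)" .
  then show ?case by blast
qed

lemma T2_shiftk_pos: assumes t: "\<tau> \<in> T2" shows "(\<lambda>\<Phi>. shiftk (int n) \<circ> \<tau> \<Phi>) \<in> T2"
proof (induction n)
  case 0
  have "(\<lambda>\<Phi>. shiftk (int 0) \<circ> \<tau> \<Phi>) = \<tau>" by (simp add: fun_eq_iff shiftk_def)
  then show ?case by (subst (asm) eq_commute) (simp only: t)
next
  case (Suc n)
  have A: "(\<lambda>\<Phi>. shiftc \<circ> (shiftk (int n) \<circ> \<tau> \<Phi>)) \<in> T2" by (rule T2_shift[OF Suc.IH])
  have eA: "(\<lambda>\<Phi>. shiftc \<circ> (shiftk (int n) \<circ> \<tau> \<Phi>)) = (\<lambda>\<Phi>. shiftk (int (Suc n)) \<circ> \<tau> \<Phi>)"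
    by (rule ext, rule ext, rule ext) (simp add: shiftc_def shiftk_def add.assoc)
  show ?case using A unfolding eA .
qed

lemma T2_shiftk_neg: assumes t: "\<tau> \<in> T2" shows "(\<lambda>\<Phi>. shiftk (- int n) \<circ> \<tau> \<Phi>) \<in> T2"
proof (induction n)
  case 0
  have "(\<lambda>\<Phi>. shiftk (- int 0) \<circ> \<tau> \<Phi>) = \<tau>" by (simp add: fun_eq_iff shiftk_def)
  then show ?case by (subst (asm) eq_commute) (simp only: t)
next
  case (Suc n)
  have A: "(\<lambda>\<Phi>. unshiftc \<circ> (shiftk (- int n) \<circ> \<tau> \<Phi>)) \<in> T2" by (rule T2_unshift[OF Suc.IH])
  have eA: "(\<lambda>\<Phi>. unshiftc \<circ> (shiftk (- int n) \<circ> \<tau> \<Phi>)) = (\<lambda>\<Phi>. shiftk (- int (Suc n)) \<circ> \<tau> \<Phi>)"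
    by (rule ext, rule ext, rule ext) (simp add: unshiftc_def shiftk_def algebra_simps)
  show ?case using A unfolding eA .
qed

lemma T2_shiftk: assumes t: "\<tau> \<in> T2" shows "(\<lambda>\<Phi>. shiftk k \<circ> \<tau> \<Phi>) \<in> T2"
proof (cases "k \<ge> 0")
  case True
  then obtain n where "k = int n" using nonneg_int_cases by blast
  then show ?thesis using T2_shiftk_pos[OF t, of n] by simp
next
  case False
  have "k = - int (nat (- k))" using False by simp
  then show ?thesis using T2_shiftk_neg[OF t, of "nat (- k)"] by simp
qed

lemma T2_bwd:
  assumes M: "finite M" and g: "g \<in> rules (card M)"
  shows "\<exists>\<tau>\<in>T2. \<tau> (Phi M g) = Phi (img j a M) (act (card M) a g)"
proof -
  have "\<exists>\<tau>\<in>T2. \<tau> (Phi M g) = Phi (img 0 a M) (act (card M) a g)"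
  proof (cases a)
    case S1 then show ?thesis by (intro bexI[OF _ T2_id]) simp
  next
    case Sc
    define \<tau> :: "gmap \<Rightarrow> gmap" where "\<tau> = (\<lambda>\<Phi>. flipc \<circ> id \<Phi> \<circ> flipc)"
    have t: "\<tau> \<in> T2" unfolding \<tau>_def by (rule T2_flip[OF T2_id])
    have "\<tau> (Phi M g) = Phi (img 0 a M) (act (card M) a g)"
      unfolding \<tau>_def by (simp add: Sc L_flip[OF M])
    then show ?thesis using t by blast
  next
    case Sr
    define \<tau> :: "gmap \<Rightarrow> gmap" where "\<tau> = (\<lambda>\<Phi>. revc \<circ> id \<Phi> \<circ> revc)"
    have t: "\<tau> \<in> T2" unfolding \<tau>_def by (rule T2_rev[OF T2_id])
    have "\<tau> (Phi M g) = Phi (img 0 a M) (act (card M) a g)"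
      unfolding \<tau>_def by (simp add: Sr L_rev[OF M])
    then show ?thesis using t by blast
  next
    case Src
    define \<tau> :: "gmap \<Rightarrow> gmap" where "\<tau> = (\<lambda>\<Phi>. flipc \<circ> (\<lambda>\<Phi>. revc \<circ> id \<Phi> \<circ> revc) \<Phi> \<circ> flipc)"
    have t: "\<tau> \<in> T2" unfolding \<tau>_def by (rule T2_flip[OF T2_rev[OF T2_id]])
    have "flipc \<circ> (revc \<circ> Phi M g \<circ> revc) \<circ> flipc
        = Phi (img 0 Sc (img 0 Sr M)) (act (card (img 0 Sr M)) Sc (act (card M) Sr g))"
      using L_rev[OF M, of g] L_flip[of "img 0 Sr M" "act (card M) Sr g"] M by simp
    also have "\<dots> = Phi (img 0 Src M) (act (card M) Src g)"
      by (simp only: img_img act_mul[OF g] card_img) (simp add: mul_def mk_def isR_def isC_def)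
    finally have "\<tau> (Phi M g) = Phi (img 0 a M) (act (card M) a g)"
      unfolding \<tau>_def using Src by simp
    then show ?thesis using t by blast
  qed
  then obtain \<tau> where t: "\<tau> \<in> T2" "\<tau> (Phi M g) = Phi (img 0 a M) (act (card M) a g)" by blast
  define \<tau>' :: "gmap \<Rightarrow> gmap" where "\<tau>' = (\<lambda>\<Phi>. shiftk j \<circ> \<tau> \<Phi>)"
  have "\<tau>' \<in> T2" unfolding \<tau>'_def by (rule T2_shiftk[OF t(1)])
  moreover have "\<tau>' (Phi M g) = Phi (img j a M) (act (card M) a g)"
  proof -
    have "\<tau>' (Phi M g) = shiftk j \<circ> Phi (img 0 a M) (act (card M) a g)" unfolding \<tau>'_def using t(2) by simp
    also have "\<dots> = Phi (img j S1 (img 0 a M)) (act (card M) a g)"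
      using L_shift[of "img 0 a M" j "act (card M) a g"] M by simp
    also have "\<dots> = Phi (img j a M) (act (card M) a g)" by (simp add: img_img)
    finally show ?thesis .
  qed
  ultimately show ?thesis by blast
qed




definition Y :: "int set \<Rightarrow> (int set \<times> rule) set" where
  "Y N = Sigma (Pow N) (\<lambda>M. irr (card M))"

definition relP :: "int set \<times> rule \<Rightarrow> int set \<times> rule \<Rightarrow> bool" where
  "relP p p' = (\<exists>j a. fst p' = img j a (fst p) \<and> snd p' = act (card (fst p)) a (snd p))"

definition relY :: "int set \<Rightarrow> ((int set \<times> rule) \<times> (int set \<times> rule)) set" where
  "relY N = {(p, p'). p \<in> Y N \<and> p' \<in> Y N \<and> relP p p'}"

lemma img_inv: "img (if isR a then j else - j) a (img j a M) = M"
proof -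
  have "img (if isR a then j else - j) a (img j a M) = img 0 S1 M"
    by (simp add: img_img)
  then show ?thesis by simp
qed

lemma relP_refl: "relP p p"
  unfolding relP_def by (rule exI[of _ 0], rule exI[of _ S1]) simp

lemma relP_sym: assumes g: "snd p \<in> rules (card (fst p))" and r: "relP p p'" shows "relP p' p"
proof -
  obtain j a where e: "fst p' = img j a (fst p)" "snd p' = act (card (fst p)) a (snd p)"
    using r by (auto simp: relP_def)
  have "fst p = img (if isR a then j else - j) a (fst p')" using e img_inv by simp
  moreover have "snd p = act (card (fst p')) a (snd p')" using e act_invol[OF g] by simp
  ultimately show ?thesis unfolding relP_def by blast
qed

lemma relP_trans: assumes g: "snd p \<in> rules (card (fst p))" and r: "relP p p'" and r': "relP p' p''"
  shows "relP p p''"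
proof -
  obtain j a where e: "fst p' = img j a (fst p)" "snd p' = act (card (fst p)) a (snd p)"
    using r by (auto simp: relP_def)
  obtain j' b where e': "fst p'' = img j' b (fst p')" "snd p'' = act (card (fst p')) b (snd p')"
    using r' by (auto simp: relP_def)
  have "fst p'' = img (if isR b then j' - j else j' + j) (mul b a) (fst p)" using e e' img_img by simp
  moreover have "snd p'' = act (card (fst p)) (mul b a) (snd p)" using e e' act_mul[OF g] by simp
  ultimately show ?thesis unfolding relP_def by blast
qed

lemma Y_fin: assumes "finite N" "p \<in> Y N" shows "finite (fst p) \<and> snd p \<in> rules (card (fst p))"
proof -
  have "fst p \<subseteq> N" "snd p \<in> irr (card (fst p))" using assms(2) by (auto simp: Y_def)
  then show ?thesis by (meson assms(1) finite_subset irr_rules)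
qed

lemma equiv_relY: assumes N: "finite N" shows "equiv (Y N) (relY N)"
proof (rule equivI)
  show "relY N \<subseteq> Y N \<times> Y N" by (auto simp: relY_def)
  show "refl_on (Y N) (relY N)" by (auto simp: refl_on_def relY_def relP_refl)
  show "sym (relY N)" unfolding sym_def relY_def using Y_fin[OF N] relP_sym by blast
  show "trans (relY N)" unfolding trans_def relY_def using Y_fin[OF N] relP_trans by blast
qed

lemma finite_Y: "finite N \<Longrightarrow> finite (Y N)"
  unfolding Y_def by (intro finite_SigmaI) (auto simp: finite_irr)

lemma congS_img: "(M, M') \<in> congS N \<longleftrightarrow> M \<subseteq> N \<and> M' \<subseteq> N \<and> (\<exists>j a. M' = img j a M)"
proof
  assume "(M, M') \<in> congS N"
  then obtain j where "M \<subseteq> N" "M' \<subseteq> N" "M' = (\<lambda>i. j + i) ` M \<or> M' = (\<lambda>i. j - i) ` M"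
    by (auto simp: congS_def)
  moreover have "img j S1 M = (\<lambda>i. j + i) ` M" "img j Sr M = (\<lambda>i. j - i) ` M" by (simp_all add: img_def)
  ultimately show "M \<subseteq> N \<and> M' \<subseteq> N \<and> (\<exists>j a. M' = img j a M)" by metis
next
  assume "M \<subseteq> N \<and> M' \<subseteq> N \<and> (\<exists>j a. M' = img j a M)"
  then show "(M, M') \<in> congS N" unfolding congS_def img_def by (auto split: if_splits)
qed

lemma equiv_congS: "equiv (Pow N) (congS N)"
proof (rule equivI)
  show "congS N \<subseteq> Pow N \<times> Pow N" by (auto simp: congS_def)
  show "refl_on (Pow N) (congS N)" unfolding refl_on_def congS_img
    by (auto intro!: exI[of _ 0] exI[of _ S1])
  show "sym (congS N)" unfolding sym_def congS_img by (metis img_inv)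
  show "trans (congS N)" unfolding trans_def congS_img by (metis img_img)
qed

lemma h_Y: "finite N \<Longrightarrow> p \<in> Y N \<Longrightarrow> Phi (fst p) (snd p) \<in> G2 N"
  by (rule P1) (auto simp: Y_def irr_def)

lemma cong_iff:
  assumes N: "finite N" and p: "p \<in> Y N" and p': "p' \<in> Y N"
  shows "(Phi (fst p) (snd p), Phi (fst p') (snd p')) \<in> congG N \<longleftrightarrow> (p, p') \<in> relY N"
proof
  have M: "finite (fst p)" and g: "snd p \<in> rules (card (fst p))" using Y_fin[OF N p] by auto
  assume "(Phi (fst p) (snd p), Phi (fst p') (snd p')) \<in> congG N"
  then obtain \<tau> where t: "\<tau> \<in> T2" "Phi (fst p') (snd p') = \<tau> (Phi (fst p) (snd p))"
    by (auto simp: congG_def)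
  obtain j a where e: "\<tau> (Phi (fst p) (snd p)) = Phi (img j a (fst p)) (act (card (fst p)) a (snd p))"
    using T2_fwd[OF t(1) M g] by blast
  have "fst p' = img j a (fst p) \<and> snd p' = act (card (fst p)) a (snd p)"
  proof (rule P3)
    show "finite (fst p')" using Y_fin[OF N p'] by simp
    show "finite (img j a (fst p))" using M by simp
    show "snd p' \<in> irr (card (fst p'))" using p' by (auto simp: Y_def)
    show "act (card (fst p)) a (snd p) \<in> irr (card (img j a (fst p)))"
      using p by (auto simp: Y_def irr_act)
    show "Phi (fst p') (snd p') = Phi (img j a (fst p)) (act (card (fst p)) a (snd p))"
      using t e by simp
  qed
  then show "(p, p') \<in> relY N" using p p' by (auto simp: relY_def relP_def)
next
  have M: "finite (fst p)" and g: "snd p \<in> rules (card (fst p))" using Y_fin[OF N p] by auto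
  assume "(p, p') \<in> relY N"
  then obtain j a where e: "fst p' = img j a (fst p)" "snd p' = act (card (fst p)) a (snd p)"
    by (auto simp: relY_def relP_def)
  obtain \<tau> where t: "\<tau> \<in> T2" "\<tau> (Phi (fst p) (snd p)) = Phi (img j a (fst p)) (act (card (fst p)) a (snd p))"
    using T2_bwd[OF M g] by blast
  then have "Phi (fst p') (snd p') = \<tau> (Phi (fst p) (snd p))" using e by simp
  then show "(Phi (fst p) (snd p), Phi (fst p') (snd p')) \<in> congG N"
    using h_Y[OF N p] h_Y[OF N p'] t(1) unfolding congG_def by blast
qed

lemma bij_h: assumes N: "finite N"
  shows "bij_betw (\<lambda>p. Phi (fst p) (snd p)) (Y N) (G2 N)"
proof (rule bij_betwI')
  fix p p' assume p: "p \<in> Y N" and p': "p' \<in> Y N"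
  show "(Phi (fst p) (snd p) = Phi (fst p') (snd p')) = (p = p')"
  proof
    assume "Phi (fst p) (snd p) = Phi (fst p') (snd p')"
    moreover have "snd p \<in> irr (card (fst p))" "snd p' \<in> irr (card (fst p'))" using p p' by (auto simp: Y_def)
    ultimately have "fst p = fst p' \<and> snd p = snd p'"
      using P3[of "fst p" "fst p'" "snd p" "snd p'"] Y_fin[OF N p] Y_fin[OF N p'] by blast
    then show "p = p'" by (simp add: prod_eq_iff)
  qed simp
next
  fix p assume "p \<in> Y N" then show "Phi (fst p) (snd p) \<in> G2 N" by (rule h_Y[OF N])
next
  fix \<Phi> assume "\<Phi> \<in> G2 N"
  then obtain M g where "M \<subseteq> N" "g \<in> irr (card M)" "\<Phi> = Phi M g" using P2[OF N] by blast
  then show "\<exists>p\<in>Y N. \<Phi> = Phi (fst p) (snd p)" by (intro bexI[of _ "(M, g)"]) (auto simp: Y_def)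
qed

lemma img_isR: "img j a M = (if isR a then img j Sr M else img j S1 M)"
  by (simp add: img_def)

lemma Sym_img: "M \<in> Sym \<longleftrightarrow> (\<exists>j. M = img j Sr M)"
  by (simp add: Sym_def img_def)

lemma rep_in: assumes K: "K \<in> Pow N // congS N" shows "rep K \<in> K"
proof -
  obtain M where "M \<in> Pow N" "K = congS N `` {M}" using K by (auto simp: quotient_def)
  then have "M \<in> K" using equiv_congS by (auto simp: equiv_def refl_on_def)
  then show ?thesis unfolding rep_def by (rule someI)
qed

lemma fiber:
  assumes N: "finite N" and K: "K \<in> Pow N // congS N"
  shows "card ({y \<in> Y N. fst y \<in> K} // relY N) =
         card (irr (card (rep K)) // (if rep K \<in> Sym then s2rel (card (rep K)) else crel (card (rep K))))"
proof -
  let ?M = "rep K" let ?m = "card (rep K)"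
  let ?H = "if rep K \<in> Sym then s2rel ?m else crel ?m"
  have KN: "K \<subseteq> Pow N" using K equiv_congS by (auto simp: quotient_def congS_def)
  have rK: "?M \<in> K" by (rule rep_in[OF K])
  then have MN: "?M \<subseteq> N" using KN by auto
  then have Mf: "finite ?M" using N finite_subset by auto
  have eqY: "equiv (Y N) (relY N)" by (rule equiv_relY[OF N])
  have inK: "(?M, M) \<in> congS N" if "M \<in> K" for M
  proof -
    obtain M1 where "K = congS N `` {M1}" using K by (auto simp: quotient_def)
    then have "(M1, ?M) \<in> congS N" "(M1, M) \<in> congS N" using rK that by auto
    then show ?thesis using equiv_congS unfolding equiv_def sym_def trans_def by blast
  qed
  have same: "((?M, g), (?M, g')) \<in> relY N \<longleftrightarrow> (g, g') \<in> ?H" if g: "g \<in> irr ?m" "g' \<in> irr ?m" for g g'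
  proof -
    have gr: "g \<in> rules ?m" using g irr_rules by auto
    have Yin: "(?M, g) \<in> Y N" "(?M, g') \<in> Y N" using g MN by (auto simp: Y_def)
    have "((?M, g), (?M, g')) \<in> relY N \<longleftrightarrow> (\<exists>j a. ?M = img j a ?M \<and> g' = act ?m a g)"
      using Yin by (simp add: relY_def relP_def)
    also have "\<dots> \<longleftrightarrow> (g, g') \<in> ?H"
    proof (cases "?M \<in> Sym")
      case True
      then obtain j0 where j0: "?M = img j0 Sr ?M" using Sym_img by blast
      have "(\<exists>j a. ?M = img j a ?M \<and> g' = act ?m a g) \<longleftrightarrow> (\<exists>a. g' = act ?m a g)"
      proof
        assume "\<exists>a. g' = act ?m a g"
        then obtain a where a: "g' = act ?m a g" by blast
        show "\<exists>j a. ?M = img j a ?M \<and> g' = act ?m a g"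
        proof (cases "isR a")
          case True
          then have "?M = img j0 a ?M" using j0 img_isR[of j0 a] by simp
          then show ?thesis using a by blast
        next
          case False
          then have "?M = img 0 a ?M" using img_isR[of 0 a] by simp
          then show ?thesis using a by blast
        qed
      qed blast
      then show ?thesis using True g by (simp add: s2rel_def)
    next
      case False
      have "(\<exists>j a. ?M = img j a ?M \<and> g' = act ?m a g) \<longleftrightarrow> (g' = g \<or> g' = act ?m Sc g)"
      proof
        assume "\<exists>j a. ?M = img j a ?M \<and> g' = act ?m a g"
        then obtain j a where a: "?M = img j a ?M" "g' = act ?m a g" by blast
        have "\<not> isR a"
        proof
          assume "isR a"
          then have "?M = img j Sr ?M" using a(1) img_isR[of j a] by simp
          then show False using False Sym_img by blast
        qed
        then have "a = S1 \<or> a = Sc" by (cases a) auto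
        then show "g' = g \<or> g' = act ?m Sc g" using a by auto
      next
        assume "g' = g \<or> g' = act ?m Sc g"
        then show "\<exists>j a. ?M = img j a ?M \<and> g' = act ?m a g"
        proof
          assume "g' = g" then show ?thesis by (intro exI[of _ 0] exI[of _ S1]) simp
        next
          assume "g' = act ?m Sc g" then show ?thesis by (intro exI[of _ 0] exI[of _ Sc]) simp
        qed
      qed
      then show ?thesis using False g by (simp add: crel_def)
    qed
    finally show ?thesis .
  qed
  have "card (irr ?m // ?H) = card ({y \<in> Y N. fst y \<in> K} // relY N)"
  proof (rule card_quot_gen[where h = "\<lambda>g. (?M, g)"])
    show "equiv (irr ?m) ?H" using equiv_s2rel equiv_crel by simp
    show "(\<lambda>g. (?M, g)) ` irr ?m \<subseteq> {y \<in> Y N. fst y \<in> K}" using rK MN by (auto simp: Y_def)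
    show "\<exists>a\<in>irr ?m. ((?M, a), b) \<in> relY N" if b: "b \<in> {y \<in> Y N. fst y \<in> K}" for b
    proof -
      obtain M g where bb: "b = (M, g)" by (cases b)
      have MK: "M \<in> K" and g: "g \<in> irr (card M)" and MN': "M \<subseteq> N" using b bb by (auto simp: Y_def)
      have "(?M, M) \<in> congS N" by (rule inK[OF MK])
      then obtain j a where Mj: "M = img j a ?M" unfolding congS_img by blast
      have cm: "card M = ?m" using Mj by simp
      let ?g0 = "act ?m a g"
      have g0: "?g0 \<in> irr ?m" using g cm irr_act by simp
      have gr: "g \<in> rules ?m" using g cm irr_rules by simp
      have "g = act ?m a ?g0" using act_invol[OF gr, of a] by simp
      then have "relP (?M, ?g0) (M, g)" unfolding relP_def using Mj by auto
      then have "((?M, ?g0), b) \<in> relY N" using g0 MN b bb by (auto simp: relY_def Y_def)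
      then show ?thesis using g0 by blast
    qed
    show "(g, g') \<in> ?H \<longleftrightarrow> ((?M, g), (?M, g')) \<in> relY N" if "g \<in> irr ?m" "g' \<in> irr ?m" for g g'
      using same[OF that] by simp
    show "sym (relY N)" "trans (relY N)" using eqY by (auto simp: equiv_def)
    show "(b, b) \<in> relY N" if "b \<in> {y \<in> Y N. fst y \<in> K}" for b
      using that eqY by (auto simp: equiv_def refl_on_def)
  qed
  then show ?thesis by simp
qed

theorem proposition9:
  fixes n :: nat
  defines "N \<equiv> {1..int n}"
  shows "card (G2 N // congG N) =
    (\<Sum>C\<in>Pow N // congS N. card (irr (card (rep C)) // s2rel (card (rep C))))
    + (\<Sum>C\<in>{C \<in> Pow N // congS N. rep C \<notin> Sym}.
         card (tbar (card (rep C)) {S1}) + card (tbar (card (rep C)) {S1, Sc}))"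
proof -
  have N: "finite N" unfolding N_def by simp
  have "card (Y N // relY N) = card (G2 N // congG N)"
  proof (rule card_quot_bij[OF equiv_relY[OF N] bij_h[OF N]])
    show "congG N \<subseteq> G2 N \<times> G2 N" by (auto simp: congG_def)
    show "(a, a') \<in> relY N \<longleftrightarrow> (Phi (fst a) (snd a), Phi (fst a') (snd a')) \<in> congG N"
      if "a \<in> Y N" "a' \<in> Y N" for a a' using cong_iff[OF N that] by simp
  qed
  moreover have "card (Y N // relY N) = (\<Sum>K\<in>Pow N // congS N. card ({y\<in>Y N. fst y \<in> K} // relY N))"
  proof (rule card_quot_sum[OF equiv_relY[OF N] finite_Y[OF N] equiv_congS])
    show "finite (Pow N)" using N by simp
    show "fst ` Y N \<subseteq> Pow N" by (auto simp: Y_def)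
    show "(fst y, fst y') \<in> congS N" if "(y, y') \<in> relY N" for y y'
      using that unfolding relY_def relP_def congS_img by (auto simp: Y_def)
  qed
  moreover have "\<dots> = (\<Sum>K\<in>Pow N // congS N. card (irr (card (rep K)) // s2rel (card (rep K)))
       + (if rep K \<notin> Sym then card (tbar (card (rep K)) {S1}) + card (tbar (card (rep K)) {S1, Sc}) else 0))"
  proof (rule sum.cong[OF refl])
    fix K assume K: "K \<in> Pow N // congS N"
    show "card ({y\<in>Y N. fst y \<in> K} // relY N) = card (irr (card (rep K)) // s2rel (card (rep K)))
       + (if rep K \<notin> Sym then card (tbar (card (rep K)) {S1}) + card (tbar (card (rep K)) {S1, Sc}) else 0)"
      using fiber[OF N K] crel_count by simp
  qed
  moreover have "finite (Pow N // congS N)"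
    using N equiv_congS by (auto intro!: finite_quotient simp: equiv_def)
  then have "(\<Sum>C\<in>{C \<in> Pow N // congS N. rep C \<notin> Sym}.
         card (tbar (card (rep C)) {S1}) + card (tbar (card (rep C)) {S1, Sc}))
     = (\<Sum>K\<in>Pow N // congS N. (if rep K \<notin> Sym then card (tbar (card (rep K)) {S1}) + card (tbar (card (rep K)) {S1, Sc}) else 0))"
    by (rule sum.inter_filter)
  ultimately show ?thesis
    by (simp only: sum.distrib)
qed


end
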